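(* Let $u_1, \ldots, u_n, v_1, \ldots, v_m \in \mathcal{L}_s$. Then $\max(u_1, \ldots, u_n) \leqslant_{\mathcal{L}} \max(v_1, \ldots, v_m)$ if and only if for every $i$ there exists $j$ such that $u_i \leqslant_{\mathcal{L}} v_j$.
   Context: $\mathcal{X}$ is a countable set of variables; a valuation is $\sigma\colon\mathcal{X}\to\mathbb{N}$. For finite $E\subseteq\mathcal{X}$, $x\in\mathcal{X}$, $S\in\mathbb{N}$, the sublevels $A(E,x,S)$ and $B(E,S)$ have values $[A(E,x,S)]_\sigma = 0$ if some $y\in E$ has $\sigma(y)=0$, and $\sigma(x)+S$ otherwise; $[B(E,S)]_\sigma=0$ if some $y\in E$ has $\sigma(y)=0$, and $S$ otherwise. $\mathcal{L}_s$ is the set of sublevels $A(E,x,S)$ with $x\in E$ and $B(E,S)$ with $S>0$. $\max$ of a finite family is evaluated pointwise (empty max has value $0$). $t_1\leqslant_{\mathcal{L}} t_2$ means $[t_1]_\sigma\le[t_2]_\sigma$ for every valuation $\sigma$. *)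

theory Defs
  imports Main "HOL-Library.Countable"
begin

text \<open>Sublevels over a countable set of variables 'v.
  SA E x S stands for A(E,x,S), SB E S for B(E,S).\<close>
datatype 'v sublevel = SA "'v set" 'v nat | SB "'v set" nat

type_synonym 'v valuation = "'v \<Rightarrow> nat"

fun sval :: "'v valuation \<Rightarrow> 'v sublevel \<Rightarrow> nat" where
  "sval \<sigma> (SA E x S) = (if \<exists>y\<in>E. \<sigma> y = 0 then 0 else \<sigma> x + S)"
| "sval \<sigma> (SB E S) = (if \<exists>y\<in>E. \<sigma> y = 0 then 0 else S)"

fun in_Ls :: "'v sublevel \<Rightarrow> bool" where
  "in_Ls (SA E x S) = (finite E \<and> x \<in> E)"
| "in_Ls (SB E S) = (finite E \<and> S > 0)"

definition max_val :: "'v valuation \<Rightarrow> 'v sublevel list \<Rightarrow> nat" where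
  "max_val \<sigma> ts = Max (insert 0 (sval \<sigma> ` set ts))"

text \<open>t1 \<le>_L t2 for terms given by their semantics.\<close>
definition leL :: "('v valuation \<Rightarrow> nat) \<Rightarrow> ('v valuation \<Rightarrow> nat) \<Rightarrow> bool" where
  "leL t1 t2 \<longleftrightarrow> (\<forall>\<sigma>. t1 \<sigma> \<le> t2 \<sigma>)"

end

theory Submission
  imports Defs
begin

lemma max_val_ge: "sval \<sigma> v \<le> max_val \<sigma> vs" if "v \<in> set vs"
  using that unfolding max_val_def by (intro Max_ge) auto

lemma max_val_wit:
  assumes "c \<le> max_val \<sigma> vs" "0 < c"
  shows "\<exists>v\<in>set vs. c \<le> sval \<sigma> v"
proof -
  have "max_val \<sigma> vs \<in> insert 0 (sval \<sigma> ` set vs)"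
    unfolding max_val_def by (intro Max_in) auto
  then show ?thesis using assms by auto
qed

fun cst :: "'v sublevel \<Rightarrow> nat" where
  "cst (SA E x S) = S" | "cst (SB E S) = S"

lemma single:
  assumes le: "leL (\<lambda>\<sigma>. max_val \<sigma> us) (\<lambda>\<sigma>. max_val \<sigma> vs)"
    and u: "u \<in> set us" "in_Ls u" and vs: "\<forall>v\<in>set vs. in_Ls v"
  shows "\<exists>v\<in>set vs. leL (\<lambda>\<sigma>. sval \<sigma> u) (\<lambda>\<sigma>. sval \<sigma> v)"
proof (cases u)
  case (SA E x S)
  define K where "K = Max (insert 0 (cst ` set vs))"
  have K: "cst v \<le> K" if "v \<in> set vs" for v
    unfolding K_def using that by (intro Max_ge) auto
  define \<sigma> where "\<sigma> = (\<lambda>y. if y = x then K + 2 else if y \<in> E then 1 else (0::nat))"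
  have xE: "x \<in> E" using u SA by simp
  have "sval \<sigma> u = K + 2 + S" using SA xE by (auto simp: \<sigma>_def split: if_splits)
  hence "K + 2 + S \<le> max_val \<sigma> vs"
    using max_val_ge[OF u(1), of \<sigma>] le unfolding leL_def by (metis order_trans)
  then obtain v where v: "v \<in> set vs" "K + 2 + S \<le> sval \<sigma> v"
    using max_val_wit by fastforce
  show ?thesis
  proof (cases v)
    case (SA F y T)
    have Fz: "\<not>(\<exists>z\<in>F. \<sigma> z = 0)" using v SA by (auto split: if_splits)
    hence FE: "F \<subseteq> E" using xE by (auto simp: \<sigma>_def split: if_splits)
    have "sval \<sigma> v = \<sigma> y + T" using SA Fz by (simp only: sval.simps if_False)
    hence "K + 2 + S \<le> \<sigma> y + T" using v by simp
    moreover have "T \<le> K" using K[OF v(1)] SA by simp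
    ultimately have yx: "y = x" and "S \<le> T" by (auto simp: \<sigma>_def split: if_splits)
    have "leL (\<lambda>\<sigma>. sval \<sigma> u) (\<lambda>\<sigma>. sval \<sigma> v)"
      unfolding leL_def using SA \<open>u = SA E x S\<close> FE yx \<open>S \<le> T\<close> by (fastforce dest: subsetD)
    then show ?thesis using v by blast
  next
    case (SB F T)
    have Fz: "\<not>(\<exists>z\<in>F. \<sigma> z = 0)" using v SB by (auto split: if_splits)
    have "sval \<sigma> v = T" using SB Fz by (simp only: sval.simps if_False)
    hence "K + 2 + S \<le> T" using v by simp
    moreover have "T \<le> K" using K[OF v(1)] SB by simp
    ultimately show ?thesis by simp
  qed
next
  case (SB E S)
  define \<sigma> where "\<sigma> = (\<lambda>y. if y \<in> E then 1 else (0::nat))"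
  have S: "S > 0" using u SB by simp
  have "sval \<sigma> u = S" using SB by (auto simp: \<sigma>_def)
  hence "S \<le> max_val \<sigma> vs"
    using max_val_ge[OF u(1), of \<sigma>] le unfolding leL_def by (metis order_trans)
  then obtain v where v: "v \<in> set vs" "S \<le> sval \<sigma> v"
    using max_val_wit S by fastforce
  show ?thesis
  proof (cases v)
    case (SA F y T)
    have Fz: "\<not>(\<exists>z\<in>F. \<sigma> z = 0)" using v SA S by (auto split: if_splits)
    hence FE: "F \<subseteq> E" by (auto simp: \<sigma>_def split: if_splits)
    have yF: "y \<in> F" using vs v SA by auto
    have "sval \<sigma> v = \<sigma> y + T" using SA Fz by (simp only: sval.simps if_False)
    moreover have "\<sigma> y = 1" using yF FE by (auto simp: \<sigma>_def)
    ultimately have "S \<le> 1 + T" using v by simp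
    have "leL (\<lambda>\<sigma>. sval \<sigma> u) (\<lambda>\<sigma>. sval \<sigma> v)"
      unfolding leL_def
    proof
      fix \<tau> :: "'a \<Rightarrow> nat"
      show "sval \<tau> u \<le> sval \<tau> v"
      proof (cases "\<exists>z\<in>E. \<tau> z = 0")
        case False
        hence "\<tau> y \<ge> 1" using yF FE by fastforce
        moreover have "\<not>(\<exists>z\<in>F. \<tau> z = 0)" using False FE by blast
        hence "sval \<tau> v = \<tau> y + T" using SA by (simp only: sval.simps if_False)
        moreover have "sval \<tau> u = S" using False \<open>u = SB E S\<close> by (simp only: sval.simps if_False)
        ultimately show ?thesis using \<open>S \<le> 1 + T\<close> by simp
      qed (use \<open>u = SB E S\<close> in auto)
    qed
    then show ?thesis using v by blast
  next
    case (SB F T)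
    have Fz: "\<not>(\<exists>z\<in>F. \<sigma> z = 0)" using v SB S by (auto split: if_splits)
    hence FE: "F \<subseteq> E" by (auto simp: \<sigma>_def split: if_splits)
    have "sval \<sigma> v = T" using SB Fz by (simp only: sval.simps if_False)
    hence "S \<le> T" using v by simp
    have "leL (\<lambda>\<sigma>. sval \<sigma> u) (\<lambda>\<sigma>. sval \<sigma> v)"
      unfolding leL_def using SB \<open>u = SB E S\<close> FE \<open>S \<le> T\<close> by (fastforce dest: subsetD)
    then show ?thesis using v by blast
  qed
qed

theorem theorem37:
  fixes us vs :: "('v::countable) sublevel list"
  assumes "\<forall>u\<in>set us. in_Ls u" and "\<forall>v\<in>set vs. in_Ls v"
  shows "leL (\<lambda>\<sigma>. max_val \<sigma> us) (\<lambda>\<sigma>. max_val \<sigma> vs) \<longleftrightarrow>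
         (\<forall>i<length us. \<exists>j<length vs. leL (\<lambda>\<sigma>. sval \<sigma> (us ! i)) (\<lambda>\<sigma>. sval \<sigma> (vs ! j)))"
proof
  assume le: "leL (\<lambda>\<sigma>. max_val \<sigma> us) (\<lambda>\<sigma>. max_val \<sigma> vs)"
  show "\<forall>i<length us. \<exists>j<length vs. leL (\<lambda>\<sigma>. sval \<sigma> (us ! i)) (\<lambda>\<sigma>. sval \<sigma> (vs ! j))"
  proof (intro allI impI)
    fix i assume i: "i < length us"
    hence "us ! i \<in> set us" by simp
    then obtain v where "v \<in> set vs" "leL (\<lambda>\<sigma>. sval \<sigma> (us ! i)) (\<lambda>\<sigma>. sval \<sigma> v)"
      using single[OF le _ _ assms(2)] assms(1) by blast
    then show "\<exists>j<length vs. leL (\<lambda>\<sigma>. sval \<sigma> (us ! i)) (\<lambda>\<sigma>. sval \<sigma> (vs ! j))"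
      by (metis in_set_conv_nth)
  qed
next
  assume H: "\<forall>i<length us. \<exists>j<length vs. leL (\<lambda>\<sigma>. sval \<sigma> (us ! i)) (\<lambda>\<sigma>. sval \<sigma> (vs ! j))"
  show "leL (\<lambda>\<sigma>. max_val \<sigma> us) (\<lambda>\<sigma>. max_val \<sigma> vs)"
    unfolding leL_def
  proof
    fix \<sigma> :: "'v \<Rightarrow> nat"
    have "\<forall>a\<in>insert 0 (sval \<sigma> ` set us). a \<le> max_val \<sigma> vs"
    proof
      fix a assume "a \<in> insert 0 (sval \<sigma> ` set us)"
      then show "a \<le> max_val \<sigma> vs"
      proof
        assume "a \<in> sval \<sigma> ` set us"
        then obtain i where i: "i < length us" "a = sval \<sigma> (us ! i)"
          by (metis imageE in_set_conv_nth)
        then obtain j where "j < length vs" "leL (\<lambda>\<sigma>. sval \<sigma> (us ! i)) (\<lambda>\<sigma>. sval \<sigma> (vs ! j))"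
          using H by blast
        then show ?thesis using i max_val_ge[of "vs ! j" vs \<sigma>] unfolding leL_def
          by (metis nth_mem order_trans)
      qed simp
    qed
    then show "max_val \<sigma> us \<le> max_val \<sigma> vs"
      unfolding max_val_def[of \<sigma> us] by (intro Max.boundedI) auto
  qed
qed

end
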